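(* Let $n\ge 3$ and $m\ge 3$ with $n\equiv 1$ or $2 \pmod 4$ and $m\equiv 0\pmod 4$. Let $H$ be the graph obtained by identifying one vertex of the cycle $C_n$ with an endpoint of the path $P_m$ (a $1$-clique sum of $C_n$ and $P_m$). Then $v(H)=v(C_n)+v(P_{m-2})-1$.
   Context: For a proper graded ideal $I$ of a standard graded polynomial ring $S$ over a field, the $v$-number is $v(I)=\min\{k\ge 0 : \exists f\in S_k,\ \mathcal P\in\operatorname{Ass}(S/I) \text{ with } (I:f)=\mathcal P\}$. For a finite simple graph $G$, $I(G)$ is the edge ideal generated by $x_ix_j$ over edges $\{x_i,x_j\}$, and $v(G):=v(I(G))$. $P_k$ is the path on $k$ vertices and $C_n$ the cycle on $n$ vertices. A $1$-clique sum of $G_1,G_2$ is $G_1\cup G_2$ where $G_1\cap G_2$ is a single vertex and neither $G_i$ is a single vertex. *)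

theory Defs
  imports Main "HOL-Library.Poly_Mapping"
begin

text \<open>Polynomials over a field 'k in variables indexed by nat:
  a polynomial is a finitely supported map from monomials monomials to 'k.\<close>

type_synonym 'k mpoly = "(nat \<Rightarrow>\<^sub>0 nat) \<Rightarrow>\<^sub>0 'k"

text \<open>The standard graded polynomial ring S = k[x_i : i in V] as a subset of 'k mpoly.\<close>
definition poly_ring :: "nat set \<Rightarrow> ('k::field) mpoly set" where
  "poly_ring V = {p. \<forall>mon \<in> Poly_Mapping.keys p. Poly_Mapping.keys mon \<subseteq> V}"

definition var :: "nat \<Rightarrow> ('k::field) mpoly" where
  "var i = Poly_Mapping.single (Poly_Mapping.single i 1) 1"

definition mon_deg :: "(nat \<Rightarrow>\<^sub>0 nat) \<Rightarrow> nat" where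
  "mon_deg mon = (\<Sum>i\<in>Poly_Mapping.keys mon. Poly_Mapping.lookup mon i)"

definition homog :: "nat set \<Rightarrow> nat \<Rightarrow> ('k::field) mpoly set" where
  "homog V k = {p \<in> poly_ring V. \<forall>mon \<in> Poly_Mapping.keys p. mon_deg mon = k}"

definition is_ideal :: "nat set \<Rightarrow> ('k::field) mpoly set \<Rightarrow> bool" where
  "is_ideal V I \<longleftrightarrow> I \<subseteq> poly_ring V \<and> 0 \<in> I \<and>
     (\<forall>a\<in>I. \<forall>b\<in>I. a + b \<in> I) \<and> (\<forall>a\<in>I. \<forall>r\<in>poly_ring V. r * a \<in> I)"

definition is_prime_ideal :: "nat set \<Rightarrow> ('k::field) mpoly set \<Rightarrow> bool" where
  "is_prime_ideal V P \<longleftrightarrow> is_ideal V P \<and> P \<noteq> poly_ring V \<and>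
     (\<forall>a\<in>poly_ring V. \<forall>b\<in>poly_ring V. a * b \<in> P \<longrightarrow> a \<in> P \<or> b \<in> P)"

definition colon :: "nat set \<Rightarrow> ('k::field) mpoly set \<Rightarrow> 'k mpoly \<Rightarrow> 'k mpoly set" where
  "colon V I f = {g \<in> poly_ring V. g * f \<in> I}"

definition Ass :: "nat set \<Rightarrow> ('k::field) mpoly set \<Rightarrow> 'k mpoly set set" where
  "Ass V I = {P. is_prime_ideal V P \<and> (\<exists>f\<in>poly_ring V. colon V I f = P)}"

definition v_number :: "nat set \<Rightarrow> ('k::field) mpoly set \<Rightarrow> nat" where
  "v_number V I = (LEAST k. \<exists>f\<in>homog V k. \<exists>P\<in>Ass V I. colon V I f = P)"

text \<open>Edge ideal of a graph with vertex set V and edge set E (edges are 2-element sets),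
  as an ideal of S = k[x_i : i in V]: generated by x_u x_v for {u,v} in E.\<close>
definition edge_poly :: "nat set \<Rightarrow> ('k::field) mpoly" where
  "edge_poly e = (\<Prod>u\<in>e. var u)"

definition edge_ideal :: "nat set \<Rightarrow> nat set set \<Rightarrow> ('k::field) mpoly set" where
  "edge_ideal V E = {(\<Sum>e\<in>F. c e * edge_poly e) | F c.
      finite F \<and> F \<subseteq> E \<and> (\<forall>e\<in>F. c e \<in> poly_ring V)}"

text \<open>v(G) for G = (V,E); depends on the coefficient field 'k (given via the type argument).\<close>
definition v_graph :: "('k::field) itself \<Rightarrow> nat set \<Rightarrow> nat set set \<Rightarrow> nat" where
  "v_graph _ V E = v_number V (edge_ideal V E :: 'k mpoly set)"

definition cycle_V :: "nat \<Rightarrow> nat set" where "cycle_V n = {0..<n}"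
definition cycle_E :: "nat \<Rightarrow> nat set set" where
  "cycle_E n = {{i, (i + 1) mod n} | i. i < n}"
definition path_V :: "nat \<Rightarrow> nat set" where "path_V m = {0..<m}"
definition path_E :: "nat \<Rightarrow> nat set set" where
  "path_E m = {{i, i + 1} | i. i + 1 < m}"

text \<open>H: C_n on 0..n-1 with a pendant path 0 - n - (n+1) - ... - (n+m-2) attached at vertex 0,
  i.e. P_m with one endpoint identified with vertex 0 of the cycle.\<close>
definition H_V :: "nat \<Rightarrow> nat \<Rightarrow> nat set" where "H_V n m = {0..<n + m - 1}"
definition H_E :: "nat \<Rightarrow> nat \<Rightarrow> nat set set" where
  "H_E n m = cycle_E n \<union> {{0, n}} \<union> {{n + j, n + j + 1} | j. j + 2 < m}"

end

theory Submission
  imports Defs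
begin


definition ind :: "nat set \<Rightarrow> (nat \<Rightarrow>\<^sub>0 nat)" where
  "ind A = (\<Sum>u\<in>A. Poly_Mapping.single u 1)"

lemma lookup_ind: "finite A \<Longrightarrow> Poly_Mapping.lookup (ind A) u = (if u \<in> A then 1 else 0)"
  unfolding ind_def by (simp add: lookup_sum lookup_single when_def)

lemma keys_ind: "finite A \<Longrightarrow> Poly_Mapping.keys (ind A) = A"
  by (auto simp: in_keys_iff lookup_ind split: if_splits)

lemma keys_add_nat: "Poly_Mapping.keys ((a::nat \<Rightarrow>\<^sub>0 nat) + b) = Poly_Mapping.keys a \<union> Poly_Mapping.keys b"
  by (auto simp: in_keys_iff lookup_add)

lemma edge_poly_eq: "finite e \<Longrightarrow> (edge_poly e :: 'k::field mpoly) = Poly_Mapping.single (ind e) 1"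
  unfolding edge_poly_def
proof (induction e rule: finite_induct)
  case empty then show ?case by (simp add: ind_def)
next
  case (insert u F)
  then show ?case by (simp add: var_def mult_single ind_def)
qed

lemma lookup_single_mult:
  "Poly_Mapping.lookup (Poly_Mapping.single k c * (p :: 'k::field mpoly)) (k + x) = c * Poly_Mapping.lookup p x"
proof -
  have "Poly_Mapping.lookup (Poly_Mapping.single k c * p) (k + x)
     = (\<Sum>l. (c when k = l) * (\<Sum>q. Poly_Mapping.lookup p q when k + x = l + q))"
    by (simp add: lookup_mult lookup_single)
  also have "\<dots> = (\<Sum>l. (c * (\<Sum>q. Poly_Mapping.lookup p q when k + x = l + q) when k = l))"
    by (simp add: when_mult)
  also have "\<dots> = c * (\<Sum>q. Poly_Mapping.lookup p q when k + x = k + q)"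
    by simp
  also have "\<dots> = c * Poly_Mapping.lookup p x"
    by simp
  finally show ?thesis .
qed

lemma keys_single_mult:
  assumes "c \<noteq> 0"
  shows "Poly_Mapping.keys (Poly_Mapping.single k c * (p :: 'k::field mpoly)) = (\<lambda>x. k + x) ` Poly_Mapping.keys p"
proof
  show "Poly_Mapping.keys (Poly_Mapping.single k c * p) \<subseteq> (\<lambda>x. k + x) ` Poly_Mapping.keys p"
    using keys_mult[of "Poly_Mapping.single k c" p] assms by auto
  show "(\<lambda>x. k + x) ` Poly_Mapping.keys p \<subseteq> Poly_Mapping.keys (Poly_Mapping.single k c * p)"
    using assms by (auto simp: in_keys_iff lookup_single_mult)
qed



lemma poly_ring_add: "a \<in> poly_ring V \<Longrightarrow> b \<in> poly_ring V \<Longrightarrow> a + b \<in> poly_ring V"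
  unfolding poly_ring_def using keys_add[of a b] by blast

lemma poly_ring_mult: "a \<in> poly_ring V \<Longrightarrow> b \<in> poly_ring V \<Longrightarrow> (a::'k::field mpoly) * b \<in> poly_ring V"
  unfolding poly_ring_def using keys_mult[of a b] by (fastforce simp: keys_add_nat)

lemma poly_ring_sum: "(\<And>i. i \<in> I \<Longrightarrow> f i \<in> poly_ring V) \<Longrightarrow> sum f I \<in> poly_ring V"
  unfolding poly_ring_def using keys_sum[of f I] by blast

lemma poly_ring_single: "Poly_Mapping.keys \<mu> \<subseteq> V \<Longrightarrow> Poly_Mapping.single \<mu> c \<in> poly_ring V"
  unfolding poly_ring_def by auto

lemma poly_ring_zero: "0 \<in> poly_ring V"
  unfolding poly_ring_def by auto

lemma poly_ring_one: "1 \<in> poly_ring V"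
  unfolding poly_ring_def by auto

lemma poly_expand: "(p::'k::field mpoly) = (\<Sum>\<mu>\<in>Poly_Mapping.keys p. Poly_Mapping.single \<mu> (Poly_Mapping.lookup p \<mu>))"
  by (rule poly_mapping_eqI) (auto simp: lookup_sum lookup_single when_def in_keys_iff)

definition inI :: "nat set set \<Rightarrow> (nat \<Rightarrow>\<^sub>0 nat) \<Rightarrow> bool" where
  "inI E \<mu> \<longleftrightarrow> (\<exists>e\<in>E. e \<subseteq> Poly_Mapping.keys \<mu>)"

lemma edge_ideal_char:
  assumes E: "\<And>e. e \<in> E \<Longrightarrow> finite e \<and> e \<subseteq> V"
  shows "(p::'k::field mpoly) \<in> edge_ideal V E \<longleftrightarrow> p \<in> poly_ring V \<and> (\<forall>\<mu>\<in>Poly_Mapping.keys p. inI E \<mu>)"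
proof
  assume "p \<in> edge_ideal V E"
  then obtain F c where p: "p = (\<Sum>e\<in>F. c e * edge_poly e)" and F: "finite F" "F \<subseteq> E"
    and c: "\<forall>e\<in>F. c e \<in> poly_ring V"
    unfolding edge_ideal_def by blast
  have ep: "\<And>e. e \<in> F \<Longrightarrow> c e * edge_poly e = Poly_Mapping.single (ind e) 1 * c e"
    using E F by (auto simp: edge_poly_eq mult.commute)
  have "p \<in> poly_ring V"
    unfolding p
  proof (rule poly_ring_sum)
    fix e assume "e \<in> F"
    then show "c e * edge_poly e \<in> poly_ring V"
    proof -
      have "e \<subseteq> V" "finite e" using E F \<open>e \<in> F\<close> by auto
      then have "Poly_Mapping.single (ind e) 1 * c e \<in> poly_ring V"
        using c \<open>e \<in> F\<close> by (intro poly_ring_mult poly_ring_single) (auto simp: keys_ind)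
      then show ?thesis by (subst ep[OF \<open>e \<in> F\<close>])
    qed
  qed
  moreover have "\<forall>\<mu>\<in>Poly_Mapping.keys p. inI E \<mu>"
  proof
    fix \<mu> assume "\<mu> \<in> Poly_Mapping.keys p"
    then obtain e where e: "e \<in> F" "\<mu> \<in> Poly_Mapping.keys (c e * edge_poly e)"
      using keys_sum[of "\<lambda>e. c e * edge_poly e" F] unfolding p by blast
    then obtain x where "\<mu> = ind e + x"
      using ep[of e] keys_single_mult[of 1 "ind e" "c e"] by auto
    moreover have "e \<in> E" "finite e" using e F E by auto
    ultimately show "inI E \<mu>" unfolding inI_def by (auto simp: keys_add_nat keys_ind)
  qed
  ultimately show "p \<in> poly_ring V \<and> (\<forall>\<mu>\<in>Poly_Mapping.keys p. inI E \<mu>)" by blast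
next
  assume H: "p \<in> poly_ring V \<and> (\<forall>\<mu>\<in>Poly_Mapping.keys p. inI E \<mu>)"
  define ch where "ch \<mu> = (SOME e. e \<in> E \<and> e \<subseteq> Poly_Mapping.keys \<mu>)" for \<mu> :: "nat \<Rightarrow>\<^sub>0 nat"
  have ch: "ch \<mu> \<in> E \<and> ch \<mu> \<subseteq> Poly_Mapping.keys \<mu>" if "\<mu> \<in> Poly_Mapping.keys p" for \<mu>
    using H that unfolding inI_def ch_def by (metis (mono_tags, lifting) someI_ex)
  define K where "K = Poly_Mapping.keys p"
  define F where "F = ch ` K"
  define c where "c e = (\<Sum>\<mu>\<in>{\<mu>\<in>K. ch \<mu> = e}. Poly_Mapping.single (\<mu> - ind e) (Poly_Mapping.lookup p \<mu>))" for e
  have fK: "finite K" unfolding K_def by simp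
  have "finite F" "F \<subseteq> E" unfolding F_def K_def using ch by auto
  moreover have "\<forall>e\<in>F. c e \<in> poly_ring (V::nat set)"
  proof
    fix e assume "e \<in> F"
    show "c e \<in> poly_ring V" unfolding c_def
    proof (rule poly_ring_sum, rule poly_ring_single)
      fix \<mu> assume "\<mu> \<in> {\<mu>\<in>K. ch \<mu> = e}"
      then have "Poly_Mapping.keys \<mu> \<subseteq> V" using H unfolding K_def poly_ring_def by auto
      moreover have "Poly_Mapping.keys (\<mu> - ind e) \<subseteq> Poly_Mapping.keys \<mu>"
        by (auto simp: in_keys_iff lookup_minus)
      ultimately show "Poly_Mapping.keys (\<mu> - ind e) \<subseteq> V" by blast
    qed
  qed
  moreover have "p = (\<Sum>e\<in>F. c e * edge_poly e)"
  proof -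
    have "c e * edge_poly e = (\<Sum>\<mu>\<in>{\<mu>\<in>K. ch \<mu> = e}. Poly_Mapping.single \<mu> (Poly_Mapping.lookup p \<mu>))"
      if "e \<in> F" for e
    proof -
      have fe: "finite e" using that \<open>F \<subseteq> E\<close> E by auto
      have "c e * edge_poly e = (\<Sum>\<mu>\<in>{\<mu>\<in>K. ch \<mu> = e}. Poly_Mapping.single (\<mu> - ind e) (Poly_Mapping.lookup p \<mu>) * Poly_Mapping.single (ind e) 1)"
        unfolding c_def using fe by (simp add: edge_poly_eq sum_distrib_right)
      also have "\<dots> = (\<Sum>\<mu>\<in>{\<mu>\<in>K. ch \<mu> = e}. Poly_Mapping.single \<mu> (Poly_Mapping.lookup p \<mu>))"
      proof (rule sum.cong[OF refl])
        fix \<mu> assume m: "\<mu> \<in> {\<mu>\<in>K. ch \<mu> = e}"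
        then have "e \<subseteq> Poly_Mapping.keys \<mu>" using ch unfolding K_def by auto
        then have "\<mu> - ind e + ind e = \<mu>"
          by (intro poly_mapping_eqI) (auto simp: lookup_add lookup_minus lookup_ind[OF fe] in_keys_iff)
        then show "Poly_Mapping.single (\<mu> - ind e) (Poly_Mapping.lookup p \<mu>) * Poly_Mapping.single (ind e) 1
             = Poly_Mapping.single \<mu> (Poly_Mapping.lookup p \<mu>)"
          by (simp add: mult_single)
      qed
      finally show ?thesis .
    qed
    then have "(\<Sum>e\<in>F. c e * edge_poly e) = (\<Sum>e\<in>F. \<Sum>\<mu>\<in>{\<mu>\<in>K. ch \<mu> = e}. Poly_Mapping.single \<mu> (Poly_Mapping.lookup p \<mu>))"
      by (rule sum.cong[OF refl])
    also have "\<dots> = (\<Sum>\<mu>\<in>K. Poly_Mapping.single \<mu> (Poly_Mapping.lookup p \<mu>))"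
      by (rule sum.group) (use fK \<open>finite F\<close> in \<open>auto simp: F_def\<close>)
    also have "\<dots> = p" unfolding K_def by (rule poly_expand[symmetric])
    finally show ?thesis by simp
  qed
  ultimately show "p \<in> edge_ideal V E" unfolding edge_ideal_def by blast
qed



definition VI :: "nat set \<Rightarrow> nat set \<Rightarrow> ('k::field) mpoly set" where
  "VI V C = {p \<in> poly_ring V. \<forall>\<mu>\<in>Poly_Mapping.keys p. Poly_Mapping.keys \<mu> \<inter> C \<noteq> {}}"

definition rs :: "((nat \<Rightarrow>\<^sub>0 nat) \<Rightarrow> bool) \<Rightarrow> ('k::field) mpoly \<Rightarrow> 'k mpoly" where
  "rs P p = Abs_poly_mapping (\<lambda>\<mu>. Poly_Mapping.lookup p \<mu> when P \<mu>)"

lemma lookup_rs: "Poly_Mapping.lookup (rs P p) = (\<lambda>\<mu>. Poly_Mapping.lookup p \<mu> when P \<mu>)"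
proof -
  have "finite {\<mu>. (Poly_Mapping.lookup p \<mu> when P \<mu>) \<noteq> 0}"
    by (rule finite_subset[of _ "Poly_Mapping.keys p"]) (auto simp: in_keys_iff)
  then show ?thesis unfolding rs_def by simp
qed

lemma keys_rs: "Poly_Mapping.keys (rs P p) = {\<mu> \<in> Poly_Mapping.keys p. P \<mu>}"
  by (auto simp: in_keys_iff lookup_rs)

lemma rs_split: "p = rs P p + rs (\<lambda>\<mu>. \<not> P \<mu>) p"
  by (rule poly_mapping_eqI) (simp add: lookup_add lookup_rs when_def)

lemma VI_ideal: "is_ideal V (VI V C :: 'k::field mpoly set)"
  unfolding is_ideal_def
proof (intro conjI ballI)
  show "VI V C \<subseteq> poly_ring V" unfolding VI_def by auto
  show "0 \<in> (VI V C :: 'k mpoly set)" unfolding VI_def by (auto simp: poly_ring_zero)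
next
  fix a b :: "'k mpoly" assume "a \<in> VI V C" "b \<in> VI V C"
  then show "a + b \<in> VI V C" unfolding VI_def using keys_add[of a b]
    by (auto intro: poly_ring_add)
next
  fix a r :: "'k mpoly" assume a: "a \<in> VI V C" and r: "r \<in> poly_ring V"
  have "r * a \<in> poly_ring V" using a r unfolding VI_def by (auto intro: poly_ring_mult)
  moreover have "Poly_Mapping.keys \<mu> \<inter> C \<noteq> {}" if mu: "\<mu> \<in> Poly_Mapping.keys (r * a)" for \<mu>
  proof -
    obtain x y where "\<mu> = x + y" "y \<in> Poly_Mapping.keys a" using keys_mult[of r a] mu by blast
    then show ?thesis using a unfolding VI_def by (auto simp: keys_add_nat)
  qed
  ultimately show "r * a \<in> VI V C" unfolding VI_def by blast
qed

lemma VI_prime: "is_prime_ideal V (VI V C :: 'k::field mpoly set)"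
  unfolding is_prime_ideal_def
proof (intro conjI ballI impI)
  show "is_ideal V (VI V C :: 'k mpoly set)" by (rule VI_ideal)
  have "(1::'k mpoly) \<notin> VI V C" unfolding VI_def by auto
  then show "VI V C \<noteq> (poly_ring V :: 'k mpoly set)" using poly_ring_one by blast
next
  fix a b :: "'k mpoly"
  assume a: "a \<in> poly_ring V" and b: "b \<in> poly_ring V" and ab: "a * b \<in> VI V C"
  define Q where "Q \<mu> = (Poly_Mapping.keys \<mu> \<inter> C = {})" for \<mu> :: "nat \<Rightarrow>\<^sub>0 nat"
  show "a \<in> VI V C \<or> b \<in> VI V C"
  proof (rule ccontr)
    assume "\<not> (a \<in> VI V C \<or> b \<in> VI V C)"
    then obtain \<alpha> \<beta> where al: "\<alpha> \<in> Poly_Mapping.keys a" "Q \<alpha>" and be: "\<beta> \<in> Poly_Mapping.keys b" "Q \<beta>"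
      using a b unfolding VI_def Q_def by auto
    define a1 where "a1 = rs Q a"
    define a2 where "a2 = rs (\<lambda>\<mu>. \<not> Q \<mu>) a"
    define b1 where "b1 = rs Q b"
    define b2 where "b2 = rs (\<lambda>\<mu>. \<not> Q \<mu>) b"
    have a12: "a = a1 + a2" and b12: "b = b1 + b2" unfolding a1_def a2_def b1_def b2_def by (rule rs_split)+
    have a2V: "a2 \<in> VI V C" using a unfolding a2_def VI_def poly_ring_def Q_def by (auto simp: keys_rs)
    have b2V: "b2 \<in> VI V C" using b unfolding b2_def VI_def poly_ring_def Q_def by (auto simp: keys_rs)
    have a1R: "a1 \<in> poly_ring V" using a unfolding a1_def poly_ring_def by (auto simp: keys_rs)
    have a1nz: "a1 \<noteq> 0" using al unfolding a1_def by (metis (mono_tags, lifting) keys_rs keys_zero empty_iff mem_Collect_eq)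
    have b1nz: "b1 \<noteq> 0" using be unfolding b1_def by (metis (mono_tags, lifting) keys_rs keys_zero empty_iff mem_Collect_eq)
    have I: "is_ideal V (VI V C :: 'k mpoly set)" by (rule VI_ideal)
    have "a1 * b2 \<in> VI V C" using I b2V a1R unfolding is_ideal_def by (metis mult.commute)
    moreover have "a2 * b \<in> VI V C" using I a2V b unfolding is_ideal_def by (simp add: mult.commute)
    ultimately have r: "a1 * b2 + a2 * b \<in> VI V C" using I unfolding is_ideal_def by blast
    have m1: "(-1 :: 'k mpoly) \<in> poly_ring V" unfolding poly_ring_def by auto
    have "a * b + (-1) * (a1 * b2 + a2 * b) \<in> VI V C"
      using I ab r m1 unfolding is_ideal_def by blast
    moreover have "a * b + (-1) * (a1 * b2 + a2 * b) = a1 * b1"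
      unfolding a12 b12 by (simp add: algebra_simps)
    ultimately have V1: "a1 * b1 \<in> VI V C" by simp
    have "a1 * b1 \<noteq> 0" using a1nz b1nz by simp
    then obtain \<mu> where "\<mu> \<in> Poly_Mapping.keys (a1 * b1)" by fastforce
    then obtain x y where "\<mu> = x + y" "x \<in> Poly_Mapping.keys a1" "y \<in> Poly_Mapping.keys b1"
      using keys_mult[of a1 b1] by blast
    then have "Q \<mu>" unfolding a1_def b1_def by (auto simp: keys_rs Q_def keys_add_nat)
    then show False using V1 \<open>\<mu> \<in> _\<close> unfolding VI_def Q_def by auto
  qed
qed



definition graph_ok :: "nat set \<Rightarrow> nat set set \<Rightarrow> bool" where
  "graph_ok V E \<longleftrightarrow> finite V \<and> (\<forall>e\<in>E. \<exists>u w. e = {u, w} \<and> u \<noteq> w \<and> u \<in> V \<and> w \<in> V)"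

definition NB :: "nat set set \<Rightarrow> nat set \<Rightarrow> nat set" where
  "NB E A = {u. \<exists>a\<in>A. {u, a} \<in> E}"

definition domc :: "nat set set \<Rightarrow> nat set \<Rightarrow> bool" where
  "domc E A \<longleftrightarrow> (\<forall>e\<in>E. \<exists>u\<in>e. u \<in> NB E A)"

lemma graph_ok_E: "graph_ok V E \<Longrightarrow> e \<in> E \<Longrightarrow> finite e \<and> e \<subseteq> V"
  unfolding graph_ok_def by fastforce

lemma comb_colon:
  assumes g: "graph_ok V E" and ind: "\<forall>e\<in>E. \<not> e \<subseteq> A" and d: "domc E A"
  shows "(\<exists>e\<in>E. e \<subseteq> A \<union> K) \<longleftrightarrow> K \<inter> NB E A \<noteq> {}"
proof
  assume "\<exists>e\<in>E. e \<subseteq> A \<union> K"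
  then obtain e where e: "e \<in> E" "e \<subseteq> A \<union> K" by blast
  then obtain u w where uw: "e = {u, w}" "u \<noteq> w" using g unfolding graph_ok_def by blast
  obtain x where x: "x \<in> e" "x \<in> NB E A" using d e unfolding domc_def by blast
  show "K \<inter> NB E A \<noteq> {}"
  proof (cases "u \<in> A")
    case True
    then have "w \<notin> A" using ind e uw by auto
    then have "w \<in> K" using e uw by auto
    moreover have "{w, u} \<in> E" using e uw by (simp add: insert_commute)
    ultimately show ?thesis using True unfolding NB_def by blast
  next
    case False
    then have uK: "u \<in> K" using e uw by auto
    show ?thesis
    proof (cases "w \<in> A")
      case True
      then show ?thesis using uK e uw unfolding NB_def by blast
    next
      case False
      then have "w \<in> K" using e uw by auto
      then show ?thesis using uK x uw by auto
    qed
  qed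
next
  assume "K \<inter> NB E A \<noteq> {}"
  then obtain u a where "u \<in> K" "a \<in> A" "{u, a} \<in> E" unfolding NB_def by blast
  then show "\<exists>e\<in>E. e \<subseteq> A \<union> K" by (intro bexI[of _ "{u, a}"]) auto
qed

lemma colon_eq:
  assumes g: "graph_ok V E" and AV: "A \<subseteq> V" and ind: "\<forall>e\<in>E. \<not> e \<subseteq> A" and d: "domc E A"
  shows "colon V (edge_ideal V E) (Poly_Mapping.single (ind A) 1 :: 'k::field mpoly) = VI V (NB E A)"
proof -
  have fA: "finite A" using g AV unfolding graph_ok_def by (auto intro: finite_subset)
  have xA: "Poly_Mapping.single (ind A) 1 \<in> (poly_ring V :: 'k mpoly set)"
    using AV fA by (intro poly_ring_single) (simp add: keys_ind)
  have E: "\<And>e. e \<in> E \<Longrightarrow> finite e \<and> e \<subseteq> V" using g by (rule graph_ok_E)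
  show ?thesis
  proof (rule set_eqI)
    fix p :: "'k mpoly"
    show "p \<in> colon V (edge_ideal V E) (Poly_Mapping.single (ind A) 1) \<longleftrightarrow> p \<in> VI V (NB E A)"
    proof (cases "p \<in> poly_ring V")
      case False then show ?thesis unfolding colon_def VI_def by auto
    next
      case True
      have pr: "p * Poly_Mapping.single (ind A) 1 \<in> poly_ring V" using True xA by (rule poly_ring_mult)
      have k: "Poly_Mapping.keys (p * Poly_Mapping.single (ind A) 1) = (\<lambda>x. ind A + x) ` Poly_Mapping.keys p"
        by (subst mult.commute) (rule keys_single_mult, simp)
      have "p \<in> colon V (edge_ideal V E) (Poly_Mapping.single (ind A) 1) \<longleftrightarrow>
            (\<forall>\<mu>\<in>Poly_Mapping.keys p. inI E (ind A + \<mu>))"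
        unfolding colon_def using True pr by (simp add: edge_ideal_char[OF E] k)
      also have "\<dots> \<longleftrightarrow> (\<forall>\<mu>\<in>Poly_Mapping.keys p. Poly_Mapping.keys \<mu> \<inter> NB E A \<noteq> {})"
        unfolding inI_def using comb_colon[OF g ind d] fA by (simp add: keys_add_nat keys_ind)
      also have "\<dots> \<longleftrightarrow> p \<in> VI V (NB E A)" unfolding VI_def using True by simp
      finally show ?thesis .
    qed
  qed
qed

lemma lower_bound:
  assumes g: "graph_ok V E" and f: "f \<in> (homog V k :: 'k::field mpoly set)"
    and P: "is_prime_ideal V (colon V (edge_ideal V E) f)"
  shows "\<exists>B. finite B \<and> B \<subseteq> V \<and> card B \<le> k \<and> domc E B"
proof -
  define P where "P = colon V (edge_ideal V E) f"
  have E: "\<And>e. e \<in> E \<Longrightarrow> finite e \<and> e \<subseteq> V" using g by (rule graph_ok_E)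
  have fR: "f \<in> poly_ring V" using f unfolding homog_def by auto
  have PI: "is_ideal V P" and Pne: "P \<noteq> poly_ring V"
    and Pp: "\<And>a b. a \<in> poly_ring V \<Longrightarrow> b \<in> poly_ring V \<Longrightarrow> a * b \<in> P \<Longrightarrow> a \<in> P \<or> b \<in> P"
    using P unfolding P_def is_prime_ideal_def by auto
  have "f \<notin> edge_ideal V E"
  proof
    assume "f \<in> edge_ideal V E"
    then have "1 \<in> P" unfolding P_def colon_def by (simp add: poly_ring_one)
    then have "r \<in> P" if "r \<in> poly_ring V" for r using PI that unfolding is_ideal_def by force
    moreover have "P \<subseteq> poly_ring V" using PI unfolding is_ideal_def by auto
    ultimately show False using Pne by blast
  qed
  then obtain \<mu> where mu: "\<mu> \<in> Poly_Mapping.keys f" "\<not> inI E \<mu>"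
    using fR by (auto simp: edge_ideal_char[OF E])
  define B where "B = Poly_Mapping.keys \<mu>"
  have fB: "finite B" unfolding B_def by simp
  have BV: "B \<subseteq> V" using fR mu unfolding poly_ring_def B_def by auto
  have "card B = (\<Sum>i\<in>B. 1)" by simp
  also have "\<dots> \<le> (\<Sum>i\<in>B. Poly_Mapping.lookup \<mu> i)"
    by (rule sum_mono) (auto simp: B_def in_keys_iff)
  also have "\<dots> = k" using f mu unfolding homog_def mon_deg_def B_def by auto
  finally have cB: "card B \<le> k" .
  have key: "\<exists>b\<in>B. {x, b} \<in> E" if x: "x \<in> V" "var x \<in> P" for x
  proof -
    have "var x * f \<in> edge_ideal V E" using x unfolding P_def colon_def by auto
    moreover have "Poly_Mapping.single x 1 + \<mu> \<in> Poly_Mapping.keys (var x * f)"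
      unfolding var_def using mu by (simp add: keys_single_mult)
    ultimately have "inI E (Poly_Mapping.single x 1 + \<mu>)" by (auto simp: edge_ideal_char[OF E])
    then obtain e where e: "e \<in> E" "e \<subseteq> insert x B"
      unfolding inI_def B_def by (auto simp: keys_add_nat)
    obtain u w where uw: "e = {u, w}" "u \<noteq> w" using g e unfolding graph_ok_def by blast
    have "\<not> e \<subseteq> B" using mu e unfolding inI_def B_def by auto
    then show ?thesis
    proof (cases "u = x")
      case True
      then have "w \<in> B" using e uw by auto
      then show ?thesis using e uw True by blast
    next
      case False
      then have "u \<in> B" using e uw by auto
      then have "w = x" using e uw \<open>\<not> e \<subseteq> B\<close> by auto
      then show ?thesis using e uw \<open>u \<in> B\<close> by (metis insert_commute)
    qed
  qed
  have "domc E B" unfolding domc_def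
  proof
    fix e assume e: "e \<in> E"
    then obtain u w where uw: "e = {u, w}" "u \<noteq> w" "u \<in> V" "w \<in> V" using g unfolding graph_ok_def by blast
    have vu: "var u \<in> poly_ring V" and vw: "var w \<in> poly_ring V"
      unfolding var_def using uw by (auto intro!: poly_ring_single)
    have ee: "edge_poly e = (var u * var w :: 'k mpoly)" unfolding edge_poly_def using uw by simp
    have "edge_poly e \<in> P"
    proof -
      have fe: "finite e" "e \<subseteq> V" using E e by auto
      have epR: "edge_poly e \<in> (poly_ring V :: 'k mpoly set)"
        using fe by (simp add: edge_poly_eq keys_ind poly_ring_single)
      have "edge_poly e * f \<in> poly_ring V" using epR fR by (rule poly_ring_mult)
      moreover have "\<forall>\<nu>\<in>Poly_Mapping.keys (edge_poly e * f). inI E \<nu>"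
        using fe e by (auto simp: edge_poly_eq keys_single_mult inI_def keys_add_nat keys_ind)
      ultimately have "edge_poly e * f \<in> edge_ideal V E" by (simp add: edge_ideal_char[OF E])
      then show ?thesis unfolding P_def colon_def using epR by simp
    qed
    then have "var u \<in> P \<or> var w \<in> P" using Pp[OF vu vw] ee by simp
    then show "\<exists>x\<in>e. x \<in> NB E B"
      using key uw unfolding NB_def by blast
  qed
  then show ?thesis using fB BV cB by blast
qed

theorem v_graph_eq:
  assumes g: "graph_ok V E" and AV: "A \<subseteq> V" and ind: "\<forall>e\<in>E. \<not> e \<subseteq> A" and d: "domc E A"
    and lb: "\<And>B. finite B \<Longrightarrow> B \<subseteq> V \<Longrightarrow> domc E B \<Longrightarrow> card A \<le> card B"
  shows "v_graph TYPE('k::field) V E = card A"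
  unfolding v_graph_def v_number_def
proof (rule Least_equality)
  have fA: "finite A" using g AV unfolding graph_ok_def by (auto intro: finite_subset)
  define f where "f = (Poly_Mapping.single (ind A) 1 :: 'k mpoly)"
  have fR: "f \<in> poly_ring V" unfolding f_def
    using AV fA by (intro poly_ring_single) (simp add: keys_ind)
  have "mon_deg (ind A) = card A" unfolding mon_deg_def using fA by (simp add: keys_ind lookup_ind)
  then have fH: "f \<in> homog V (card A)" using fR unfolding homog_def f_def by simp
  have "colon V (edge_ideal V E) f = VI V (NB E A)" unfolding f_def by (rule colon_eq[OF g AV ind d])
  then have "colon V (edge_ideal V E) f \<in> Ass V (edge_ideal V E)"
    unfolding Ass_def using VI_prime fR by auto
  then show "\<exists>f\<in>homog V (card A). \<exists>P\<in>Ass V (edge_ideal V E :: 'k mpoly set). colon V (edge_ideal V E) f = P"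
    using fH by blast
next
  fix k assume "\<exists>f\<in>homog V k. \<exists>P\<in>Ass V (edge_ideal V E :: 'k mpoly set). colon V (edge_ideal V E) f = P"
  then obtain f where f: "f \<in> (homog V k :: 'k mpoly set)" and P: "is_prime_ideal V (colon V (edge_ideal V E) f)"
    unfolding Ass_def by auto
  obtain B where "finite B" "B \<subseteq> V" "card B \<le> k" "domc E B" using lower_bound[OF g f P] by blast
  then show "card A \<le> k" using lb by fastforce
qed



lemma card_NB:
  assumes "finite B" "\<And>b. b \<in> B \<Longrightarrow> finite {u. {u, b} \<in> E} \<and> card {u. {u, b} \<in> E} \<le> h b"
  shows "card (NB E B) \<le> (\<Sum>b\<in>B. h b)"
proof -
  have "NB E B = (\<Union>b\<in>B. {u. {u, b} \<in> E})" unfolding NB_def by auto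
  then have "card (NB E B) \<le> (\<Sum>b\<in>B. card {u. {u, b} \<in> E})" using card_UN_le[OF assms(1)] by simp
  also have "\<dots> \<le> (\<Sum>b\<in>B. h b)" using assms(2) by (intro sum_mono) auto
  finally show ?thesis .
qed

lemma count2:
  assumes "finite X" "\<And>x. x \<in> S \<Longrightarrow> x \<in> X \<or> g x \<in> X" "inj_on g S"
  shows "card S \<le> 2 * card X"
proof -
  have S: "S = (S \<inter> X) \<union> {x \<in> S. g x \<in> X}" using assms(2) by auto
  have "card (S \<inter> X) \<le> card X" using assms(1) by (intro card_mono) auto
  moreover have "card {x \<in> S. g x \<in> X} \<le> card X"
  proof -
    have "card {x \<in> S. g x \<in> X} = card (g ` {x \<in> S. g x \<in> X})"
      using assms(3) by (intro card_image[symmetric]) (auto intro: inj_on_subset)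
    also have "\<dots> \<le> card X" using assms(1) by (intro card_mono) auto
    finally show ?thesis .
  qed
  ultimately show ?thesis using card_Un_le[of "S \<inter> X" "{x \<in> S. g x \<in> X}"] S by simp
qed

lemma dom_NB_finite: assumes "graph_ok V E" shows "finite (NB E B)"
proof (rule finite_subset[of _ V])
  show "NB E B \<subseteq> V"
  proof
    fix u assume "u \<in> NB E B"
    then obtain a where "{u, a} \<in> E" unfolding NB_def by blast
    then obtain x w where "{u, a} = {x, w}" "x \<in> V" "w \<in> V" using assms unfolding graph_ok_def by blast
    then show "u \<in> V" by (auto simp: doubleton_eq_iff)
  qed
  show "finite V" using assms unfolding graph_ok_def by simp
qed

lemma dom_edge: assumes "domc E B" "{x, y} \<in> E" shows "x \<in> NB E B \<or> y \<in> NB E B"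
proof -
  obtain u where "u \<in> {x, y}" "u \<in> NB E B" using assms unfolding domc_def by meson
  then show ?thesis by auto
qed

lemma cyc_edge: "i < n \<Longrightarrow> {i, (i + 1) mod n} \<in> cycle_E n"
  unfolding cycle_E_def by auto

lemma cyc_graph_ok: assumes n: "n \<ge> 3" shows "graph_ok (cycle_V n) (cycle_E n)"
  unfolding graph_ok_def
proof (intro conjI ballI)
  show "finite (cycle_V n)" unfolding cycle_V_def by simp
  fix e assume "e \<in> cycle_E n"
  then obtain i where i: "i < n" "e = {i, (i + 1) mod n}" unfolding cycle_E_def by blast
  have ne: "i \<noteq> (i + 1) mod n"
  proof (cases "i + 1 < n")
    case True then show ?thesis by simp
  next
    case False then have "i + 1 = n" using i by simp
    then show ?thesis using n by simp
  qed
  have "i \<in> cycle_V n" "(i + 1) mod n \<in> cycle_V n" unfolding cycle_V_def using i by auto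
  then show "\<exists>u w. e = {u, w} \<and> u \<noteq> w \<and> u \<in> cycle_V n \<and> w \<in> cycle_V n"
    using i(2) ne by blast
qed

lemma cyc_nbrs: "n \<ge> 3 \<Longrightarrow> {u. {u, b} \<in> cycle_E n} \<subseteq> {(b + 1) mod n, (b + n - 1) mod n}"
proof
  fix u assume n: "n \<ge> 3" and "u \<in> {u. {u, b} \<in> cycle_E n}"
  then obtain i where i: "i < n" "{u, b} = {i, (i + 1) mod n}" unfolding cycle_E_def by blast
  then consider "u = i" "b = (i + 1) mod n" | "u = (i + 1) mod n" "b = i"
    by (auto simp: doubleton_eq_iff)
  then show "u \<in> {(b + 1) mod n, (b + n - 1) mod n}"
  proof cases
    case 1
    show ?thesis
    proof (cases "i + 1 < n")
      case True
      then have "b = i + 1" using 1 by simp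
      then have "(b + n - 1) mod n = i" using i by simp
      then show ?thesis using 1 by simp
    next
      case False
      then have "i = n - 1" using i by simp
      then have "b = 0" using 1 n by simp
      then show ?thesis using 1 \<open>i = n - 1\<close> n by simp
    qed
  next
    case 2 then show ?thesis by simp
  qed
qed

lemma cyc_lower:
  assumes n: "n \<ge> 3" and B: "finite B" "domc (cycle_E n) B"
  shows "n \<le> 4 * card B"
proof -
  let ?E = "cycle_E n"
  have fX: "finite (NB ?E B)" using dom_NB_finite[OF cyc_graph_ok[OF n]] .
  have "card {0..<n} \<le> 2 * card (NB ?E B)"
  proof (rule count2[OF fX, of _ "\<lambda>x. (x + 1) mod n"])
    fix x assume "x \<in> {0..<n}"
    then show "x \<in> NB ?E B \<or> (x + 1) mod n \<in> NB ?E B" using dom_edge[OF B(2) cyc_edge] by simp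
  next
    show "inj_on (\<lambda>x. (x + 1) mod n) {0..<n}"
    proof (rule inj_onI)
      fix x y assume xy: "x \<in> {0..<n}" "y \<in> {0..<n}" "(x + 1) mod n = (y + 1) mod n"
      show "x = y"
      proof (cases "x + 1 < n"; cases "y + 1 < n")
        assume "x + 1 < n" "y + 1 < n" then show ?thesis using xy by simp
      next
        assume a: "x + 1 < n" "\<not> y + 1 < n"
        then have "y + 1 = n" using xy by simp
        then show ?thesis using xy a by simp
      next
        assume a: "\<not> x + 1 < n" "y + 1 < n"
        then have "x + 1 = n" using xy by simp
        then show ?thesis using xy a by simp
      next
        assume a: "\<not> x + 1 < n" "\<not> y + 1 < n"
        then show ?thesis using xy by simp
      qed
    qed
  qed
  moreover have "card (NB ?E B) \<le> (\<Sum>b\<in>B. 2)"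
  proof (rule card_NB[OF B(1)])
    fix b
    have "card {u. {u, b} \<in> ?E} \<le> card {(b + 1) mod n, (b + n - 1) mod n}"
      by (rule card_mono) (use cyc_nbrs[OF n] in blast)+
    also have "\<dots> \<le> 2" by (simp add: card_insert_if)
    finally show "finite {u. {u, b} \<in> ?E} \<and> card {u. {u, b} \<in> ?E} \<le> 2"
      using cyc_nbrs[OF n] by (auto intro: finite_subset)
  qed
  ultimately show ?thesis by simp
qed



lemma NB_I: "a \<in> A \<Longrightarrow> {u, a} \<in> E \<Longrightarrow> u \<in> NB E A"
  unfolding NB_def by blast

lemma cyc_value:
  assumes n: "n \<ge> 3" and nm: "n mod 4 = 1 \<or> n mod 4 = 2"
  shows "v_graph TYPE('k::field) (cycle_V n) (cycle_E n) = n div 4 + 1"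
proof -
  define t where "t = n div 4"
  have nt: "n = 4 * t + 1 \<or> n = 4 * t + 2" using nm unfolding t_def by presburger
  have t1: "t \<ge> 1" using nt n by auto
  define A where "A = insert 0 ((\<lambda>i. 4 * i + 2) ` {..<t})"
  have Aeven: "x = 0 \<or> x mod 4 = 2" if "x \<in> A" for x
  proof -
    have "x = 0 \<or> (\<exists>i. x = 4 * i + 2)" using that unfolding A_def by auto
    then show ?thesis by presburger
  qed
  have cA: "card A = t + 1"
  proof -
    have "card ((\<lambda>i. 4 * i + 2) ` {..<t}) = t" by (subst card_image) (auto intro: inj_onI)
    then show ?thesis unfolding A_def by (subst card_insert_disjoint) auto
  qed
  have AV: "A \<subseteq> cycle_V n" unfolding A_def cycle_V_def using nt n by auto
  have nb: "x \<in> NB (cycle_E n) A" if x: "x < n" "odd x \<or> x = n - 1" for x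
  proof (cases "x = n - 1")
    case True
    have "{n - 1, (n - 1 + 1) mod n} \<in> cycle_E n" using n by (intro cyc_edge) auto
    then have "{x, 0} \<in> cycle_E n" using True n by simp
    then show ?thesis by (rule NB_I[rotated]) (simp add: A_def)
  next
    case False
    then have ox: "odd x" "x + 1 < n" using x by auto
    then have "x mod 4 = 1 \<or> x mod 4 = 3" by presburger
    then show ?thesis
    proof
      assume "x mod 4 = 1"
      then obtain j where j: "x = 4 * j + 1" by (metis mod_div_decomp mult.commute)
      have "j < t" using ox nt j by auto
      then have a: "x + 1 \<in> A" unfolding A_def using j by auto
      have "{x, (x + 1) mod n} \<in> cycle_E n" using x by (intro cyc_edge) auto
      then have "{x, x + 1} \<in> cycle_E n" using ox by simp
      then show ?thesis by (rule NB_I[OF a])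
    next
      assume "x mod 4 = 3"
      then obtain j where j: "x = 4 * j + 3" by (metis mod_div_decomp mult.commute)
      have "j < t" using ox nt j by auto
      then have a: "x - 1 \<in> A" unfolding A_def using j by auto
      have "{x - 1, (x - 1 + 1) mod n} \<in> cycle_E n" using x by (intro cyc_edge) auto
      moreover have h: "{x - 1, (x - 1 + 1) mod n} = {x, x - 1}" using j x by auto
      ultimately have "{x, x - 1} \<in> cycle_E n" by simp
      then show ?thesis by (rule NB_I[OF a])
    qed
  qed
  have d: "domc (cycle_E n) A" unfolding domc_def
  proof
    fix e assume "e \<in> cycle_E n"
    then obtain i where i: "i < n" "e = {i, (i + 1) mod n}" unfolding cycle_E_def by blast
    show "\<exists>u\<in>e. u \<in> NB (cycle_E n) A"
    proof (cases "i + 1 < n")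
      case True
      then have e: "e = {i, i + 1}" using i by simp
      show ?thesis
      proof (cases "odd i")
        case True then show ?thesis using nb[of i] i e by auto
      next
        case False then show ?thesis using nb[of "i + 1"] \<open>i + 1 < n\<close> e by auto
      qed
    next
      case False
      then have "i = n - 1" using i by simp
      then show ?thesis using nb[of i] i by auto
    qed
  qed
  have ind: "\<forall>e\<in>cycle_E n. \<not> e \<subseteq> A"
  proof (intro ballI notI)
    fix e assume "e \<in> cycle_E n" "e \<subseteq> A"
    then obtain i where i: "i < n" "e = {i, (i + 1) mod n}" unfolding cycle_E_def by blast
    show False
    proof (cases "i + 1 < n")
      case True
      then have "i \<in> A" "i + 1 \<in> A" using i \<open>e \<subseteq> A\<close> by auto
      then have "i = 0 \<or> i mod 4 = 2" "i + 1 = 0 \<or> (i + 1) mod 4 = 2" using Aeven by blast+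
      then show False by presburger
    next
      case False
      then have "i = n - 1" using i by simp
      then have "n - 1 \<in> A" using i \<open>e \<subseteq> A\<close> by auto
      then show False using Aeven[of "n - 1"] nt t1 by auto
    qed
  qed
  have "v_graph TYPE('k) (cycle_V n) (cycle_E n) = card A"
  proof (rule v_graph_eq[OF cyc_graph_ok[OF n] AV ind d])
    fix B assume "finite B" "B \<subseteq> cycle_V n" "domc (cycle_E n) B"
    then have "n \<le> 4 * card B" using cyc_lower[OF n] by blast
    then show "card A \<le> card B" using cA nt by auto
  qed
  then show ?thesis using cA t_def by simp
qed



lemma path_edge: "i + 1 < k \<Longrightarrow> {i, i + 1} \<in> path_E k"
  unfolding path_E_def by auto

lemma path_graph_ok: "graph_ok (path_V k) (path_E k)"
  unfolding graph_ok_def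
proof (intro conjI ballI)
  show "finite (path_V k)" unfolding path_V_def by simp
  fix e assume "e \<in> path_E k"
  then obtain i where i: "i + 1 < k" "e = {i, i + 1}" unfolding path_E_def by blast
  have "i \<in> path_V k" "i + 1 \<in> path_V k" "i \<noteq> i + 1" unfolding path_V_def using i by auto
  then show "\<exists>u w. e = {u, w} \<and> u \<noteq> w \<and> u \<in> path_V k \<and> w \<in> path_V k"
    using i(2) by blast
qed

lemma path_nbrs: "{u. {u, b} \<in> path_E k} \<subseteq> {b - 1, b + 1}"
proof
  fix u assume "u \<in> {u. {u, b} \<in> path_E k}"
  then obtain i where i: "{u, b} = {i, i + 1}" unfolding path_E_def by blast
  then show "u \<in> {b - 1, b + 1}" by (auto simp: doubleton_eq_iff)
qed

lemma path_lower:
  assumes B: "finite B" "domc (path_E k) B"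
  shows "k - 1 \<le> 4 * card B"
proof -
  let ?E = "path_E k"
  have fX: "finite (NB ?E B)" using dom_NB_finite[OF path_graph_ok] .
  have "card {0..<k - 1} \<le> 2 * card (NB ?E B)"
  proof (rule count2[OF fX, of _ "\<lambda>x. x + 1"])
    fix x assume "x \<in> {0..<k - 1}"
    then show "x \<in> NB ?E B \<or> x + 1 \<in> NB ?E B" using dom_edge[OF B(2) path_edge] by simp
  qed (auto intro: inj_onI)
  moreover have "card (NB ?E B) \<le> (\<Sum>b\<in>B. 2)"
  proof (rule card_NB[OF B(1)])
    fix b
    have "card {u. {u, b} \<in> ?E} \<le> card {b - 1, b + 1}"
      by (rule card_mono) (use path_nbrs in blast)+
    also have "\<dots> \<le> 2" by (simp add: card_insert_if)
    finally show "finite {u. {u, b} \<in> ?E} \<and> card {u. {u, b} \<in> ?E} \<le> 2"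
      using path_nbrs by (auto intro: finite_subset)
  qed
  ultimately show ?thesis by simp
qed

lemma path_value:
  assumes m: "m \<ge> 3" and mm: "m mod 4 = 0"
  shows "v_graph TYPE('k::field) (path_V (m - 2)) (path_E (m - 2)) = m div 4"
proof -
  define s where "s = m div 4"
  define k where "k = m - 2"
  have ms: "m = 4 * s" using mm unfolding s_def by presburger
  have s1: "s \<ge> 1" using ms m by auto
  have ks: "k = 4 * s - 2" unfolding k_def using ms by simp
  define A where "A = (\<lambda>i. 4 * i + 1) ` {..<s}"
  have Aodd: "x mod 4 = 1" if "x \<in> A" for x
  proof -
    have "\<exists>i. x = 4 * i + 1" using that unfolding A_def by auto
    then show ?thesis by presburger
  qed
  have cA: "card A = s" unfolding A_def by (subst card_image) (auto intro: inj_onI)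
  have AV: "A \<subseteq> path_V k" unfolding A_def path_V_def ks using s1 by auto
  have nb: "x \<in> NB (path_E k) A" if x: "x < k" "even x" for x
  proof -
    have "x mod 4 = 0 \<or> x mod 4 = 2" using x by presburger
    then show ?thesis
    proof
      assume "x mod 4 = 0"
      define j where "j = x div 4"
      have j: "x = 4 * j" unfolding j_def using \<open>x mod 4 = 0\<close> by presburger
      have "j < s" using x ks j by presburger
      then have a: "x + 1 \<in> A" unfolding A_def using j by auto
      have "x + 1 < k" using x ks j by presburger
      then have "{x, x + 1} \<in> path_E k" by (rule path_edge)
      then show ?thesis by (rule NB_I[OF a])
    next
      assume "x mod 4 = 2"
      define j where "j = x div 4"
      have j: "x = 4 * j + 2" unfolding j_def using \<open>x mod 4 = 2\<close> by presburger
      have "j < s" using x ks j by presburger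
      then have a: "x - 1 \<in> A" unfolding A_def using j by auto
      have "x - 1 + 1 < k" using x j by auto
      then have "{x - 1, x - 1 + 1} \<in> path_E k" by (rule path_edge)
      moreover have h: "{x - 1, x - 1 + 1} = {x, x - 1}" using j by auto
      ultimately have "{x, x - 1} \<in> path_E k" by simp
      then show ?thesis by (rule NB_I[OF a])
    qed
  qed
  have d: "domc (path_E k) A" unfolding domc_def
  proof
    fix e assume "e \<in> path_E k"
    then obtain i where i: "i + 1 < k" "e = {i, i + 1}" unfolding path_E_def by blast
    show "\<exists>u\<in>e. u \<in> NB (path_E k) A"
    proof (cases "even i")
      case True then show ?thesis using nb[of i] i by auto
    next
      case False then show ?thesis using nb[of "i + 1"] i by auto
    qed
  qed
  have ind: "\<forall>e\<in>path_E k. \<not> e \<subseteq> A"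
  proof (intro ballI notI)
    fix e assume "e \<in> path_E k" "e \<subseteq> A"
    then obtain i where i: "i + 1 < k" "e = {i, i + 1}" unfolding path_E_def by blast
    then have "i mod 4 = 1" "(i + 1) mod 4 = 1" using Aodd \<open>e \<subseteq> A\<close> by auto
    then show False by presburger
  qed
  have "v_graph TYPE('k) (path_V k) (path_E k) = card A"
  proof (rule v_graph_eq[OF path_graph_ok AV ind d])
    fix B assume "finite B" "B \<subseteq> path_V k" "domc (path_E k) B"
    then have "k - 1 \<le> 4 * card B" using path_lower by blast
    then show "card A \<le> card B" using cA ks s1 by auto
  qed
  then show ?thesis using cA s_def k_def by simp
qed



lemma H_cyc: "e \<in> cycle_E n \<Longrightarrow> e \<in> H_E n m" unfolding H_E_def by simp
lemma H_0n: "{0, n} \<in> H_E n m" unfolding H_E_def by simp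
lemma H_path: "j + 2 < m \<Longrightarrow> {n + j, n + j + 1} \<in> H_E n m" unfolding H_E_def by blast

lemma H_cases:
  assumes "e \<in> H_E n m"
  obtains (cyc) i where "i < n" "e = {i, (i + 1) mod n}"
    | (bridge) "e = {0, n}"
    | (path) j where "j + 2 < m" "e = {n + j, n + j + 1}"
  using assms unfolding H_E_def cycle_E_def by blast

lemma H_graph_ok: assumes n: "n \<ge> 3" and m: "m \<ge> 3" shows "graph_ok (H_V n m) (H_E n m)"
  unfolding graph_ok_def
proof (intro conjI ballI)
  show "finite (H_V n m)" unfolding H_V_def by simp
  fix e assume "e \<in> H_E n m"
  then show "\<exists>u w. e = {u, w} \<and> u \<noteq> w \<and> u \<in> H_V n m \<and> w \<in> H_V n m"
  proof (cases rule: H_cases)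
    case (cyc i)
    have "e \<in> cycle_E n" using cyc unfolding cycle_E_def by blast
    then obtain u w where "e = {u, w}" "u \<noteq> w" "u \<in> cycle_V n" "w \<in> cycle_V n"
      using cyc_graph_ok[OF n] unfolding graph_ok_def by blast
    moreover have "cycle_V n \<subseteq> H_V n m" unfolding cycle_V_def H_V_def using m by auto
    ultimately show ?thesis by blast
  next
    case bridge
    have "0 \<in> H_V n m" "n \<in> H_V n m" "(0::nat) \<noteq> n" unfolding H_V_def using n m by auto
    then show ?thesis using bridge by blast
  next
    case (path j)
    have "n + j \<in> H_V n m" "n + j + 1 \<in> H_V n m" "n + j \<noteq> n + j + 1" unfolding H_V_def using path by auto
    then show ?thesis using path by blast
  qed
qed

lemma mod_succ_inj:
  assumes "(x + 1) mod n = (y + 1) mod n" "x < (n::nat)" "y < n"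
  shows "x = y"
proof (cases "x + 1 < n"; cases "y + 1 < n")
  assume "x + 1 < n" "y + 1 < n" then show ?thesis using assms by simp
next
  assume a: "x + 1 < n" "\<not> y + 1 < n"
  then have "y + 1 = n" using assms by simp
  then have "(y + 1) mod n = 0" by simp
  then have "(x + 1) mod n = 0" using assms(1) by simp
  then have "x + 1 = 0" using a(1) by (simp del: Suc_eq_plus1 add: mod_less)
  then show ?thesis by simp
next
  assume a: "\<not> x + 1 < n" "y + 1 < n"
  then have "x + 1 = n" using assms by simp
  then have "(x + 1) mod n = 0" by simp
  then have "(y + 1) mod n = 0" using assms(1) by simp
  then have "y + 1 = 0" using a(2) by (simp del: Suc_eq_plus1 add: mod_less)
  then show ?thesis by simp
next
  assume a: "\<not> x + 1 < n" "\<not> y + 1 < n"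
  then show ?thesis using assms by simp
qed

definition Nsup :: "nat \<Rightarrow> nat \<Rightarrow> nat set" where
  "Nsup n b = (if b = 0 then {1, n - 1, n} else if b < n then {(b + 1) mod n, (b + n - 1) mod n}
     else if b = n then {0, n + 1} else {b - 1, b + 1})"

lemma H_nbrs: assumes n: "n \<ge> 3" shows "{u. {u, b} \<in> H_E n m} \<subseteq> Nsup n b"
proof
  fix u assume "u \<in> {u. {u, b} \<in> H_E n m}"
  then have "{u, b} \<in> H_E n m" by simp
  then show "u \<in> Nsup n b"
  proof (cases rule: H_cases)
    case (cyc i)
    then have c: "{u, b} \<in> cycle_E n" unfolding cycle_E_def by blast
    then have u: "u \<in> {(b + 1) mod n, (b + n - 1) mod n}" using cyc_nbrs[OF n] by blast
    have "b < n" using cyc n by (auto simp: doubleton_eq_iff)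
    show ?thesis
    proof (cases "b = 0")
      case True
      then have "u \<in> {1, n - 1}" using u n by auto
      then show ?thesis using True unfolding Nsup_def by auto
    next
      case False then show ?thesis using u \<open>b < n\<close> unfolding Nsup_def by auto
    qed
  next
    case bridge
    then show ?thesis using n unfolding Nsup_def by (auto simp: doubleton_eq_iff)
  next
    case (path j)
    then have "(u = n + j \<and> b = n + j + 1) \<or> (u = n + j + 1 \<and> b = n + j)" by (auto simp: doubleton_eq_iff)
    then show ?thesis using n unfolding Nsup_def by auto
  qed
qed

lemma card_Nsup: "card (Nsup n b) \<le> (if b = 0 then 3 else 2)"
  unfolding Nsup_def by (auto simp: card_insert_if)

lemma sum_32: "finite B \<Longrightarrow> (\<Sum>b\<in>B. if b = 0 then 3 else 2::nat) \<le> 2 * card B + (if 0 \<in> B then 1 else 0)"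
  by (induction B rule: finite_induct) auto

lemma H_lower:
  assumes n: "n \<ge> 3" and m: "m \<ge> 3" and B: "finite B" "domc (H_E n m) B"
  shows "n + m - 2 \<le> 4 * card B + 2"
proof -
  let ?E = "H_E n m"
  define g where "g x = (if x < n then (x + 1) mod n else x + 1)" for x
  have fX: "finite (NB ?E B)" using dom_NB_finite[OF H_graph_ok[OF n m]] .
  have "card {0..<n + m - 2} \<le> 2 * card (NB ?E B)"
  proof (rule count2[OF fX, of _ g])
    fix x assume x: "x \<in> {0..<n + m - 2}"
    have "{x, g x} \<in> ?E"
    proof (cases "x < n")
      case True
      then have "{x, (x + 1) mod n} \<in> cycle_E n" by (rule cyc_edge)
      then have "{x, (x + 1) mod n} \<in> ?E" by (rule H_cyc)
      then show ?thesis using True unfolding g_def by simp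
    next
      case False
      then obtain j where j: "x = n + j" by (metis le_add_diff_inverse not_less)
      then have "j + 2 < m" using x by auto
      then have "{n + j, n + j + 1} \<in> ?E" by (rule H_path)
      then show ?thesis using False j unfolding g_def by simp
    qed
    then show "x \<in> NB ?E B \<or> g x \<in> NB ?E B" by (rule dom_edge[OF B(2)])
  next
    show "inj_on g {0..<n + m - 2}"
    proof (rule inj_onI)
      fix x y assume xy: "x \<in> {0..<n + m - 2}" "y \<in> {0..<n + m - 2}" "g x = g y"
      have gx: "x < n \<Longrightarrow> g x < n" "\<not> x < n \<Longrightarrow> g x > n" for x unfolding g_def using n by auto
      show "x = y"
      proof (cases "x < n"; cases "y < n")
        assume a: "x < n" "y < n"
        then have "(x + 1) mod n = (y + 1) mod n" using xy unfolding g_def by simp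
        then show ?thesis using a by (rule mod_succ_inj)
      next
        assume "x < n" "\<not> y < n" then show ?thesis using gx[of x] gx[of y] xy by simp
      next
        assume "\<not> x < n" "y < n" then show ?thesis using gx[of x] gx[of y] xy by simp
      next
        assume "\<not> x < n" "\<not> y < n" then show ?thesis using xy unfolding g_def by simp
      qed
    qed
  qed
  moreover have "card (NB ?E B) \<le> (\<Sum>b\<in>B. if b = 0 then 3 else 2)"
  proof (rule card_NB[OF B(1)])
    fix b
    have fN: "finite (Nsup n b)" unfolding Nsup_def by simp
    have "card {u. {u, b} \<in> ?E} \<le> card (Nsup n b)"
      by (rule card_mono[OF fN H_nbrs[OF n]])
    also have "\<dots> \<le> (if b = 0 then 3 else 2)" by (rule card_Nsup)
    finally show "finite {u. {u, b} \<in> ?E} \<and> card {u. {u, b} \<in> ?E} \<le> (if b = 0 then 3 else 2)"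
      using finite_subset[OF H_nbrs[OF n, where m=m and b=b] fN] by simp
  qed
  moreover have "(\<Sum>b\<in>B. if b = 0 then 3 else 2::nat) \<le> 2 * card B + 1"
    using sum_32[OF B(1)] by (auto split: if_splits)
  ultimately show ?thesis by simp
qed



lemma H_value:
  assumes n: "n \<ge> 3" and m: "m \<ge> 3"
    and nm: "n mod 4 = 1 \<or> n mod 4 = 2" and mm: "m mod 4 = 0"
  shows "v_graph TYPE('k::field) (H_V n m) (H_E n m) = n div 4 + m div 4"
proof -
  define t where "t = n div 4"
  define s where "s = m div 4"
  have nt: "n = 4 * t + 1 \<or> n = 4 * t + 2" using nm unfolding t_def by presburger
  have ms: "m = 4 * s" using mm unfolding s_def by presburger
  have t1: "t \<ge> 1" using nt n by auto
  have s1: "s \<ge> 1" using ms m by auto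
  let ?E = "H_E n m"
  define A1 where "A1 = (\<lambda>i. 4 * i + 3) ` {..<t}"
  define A2 where "A2 = (\<lambda>i. n + 4 * i) ` {..<s}"
  define A where "A = A1 \<union> A2"
  have A1c: "x < n \<and> x mod 4 = 3" if xa: "x \<in> A1" for x
  proof -
    obtain i where "i < t" "x = 4 * i + 3" using xa unfolding A1_def by auto
    then show ?thesis using nt by presburger
  qed
  have A2c: "x \<ge> n \<and> (x - n) mod 4 = 0" if xa: "x \<in> A2" for x
  proof -
    obtain i where "i < s" "x = n + 4 * i" using xa unfolding A2_def by auto
    then show ?thesis by simp
  qed
  have cA: "card A = t + s"
  proof -
    have "card A1 = t" unfolding A1_def by (subst card_image) (auto intro: inj_onI)
    moreover have "card A2 = s" unfolding A2_def by (subst card_image) (auto intro: inj_onI)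
    moreover have "A1 \<inter> A2 = {}" using A1c A2c by fastforce
    ultimately show ?thesis unfolding A_def by (simp add: card_Un_disjoint A1_def A2_def)
  qed
  have AV: "A \<subseteq> H_V n m"
  proof
    fix x assume "x \<in> A"
    then show "x \<in> H_V n m"
    proof (unfold A_def, elim UnE)
      assume "x \<in> A1" then show ?thesis using A1c[of x] m unfolding H_V_def by auto
    next
      assume "x \<in> A2"
      then obtain i where "i < s" "x = n + 4 * i" unfolding A2_def by auto
      then show ?thesis using ms unfolding H_V_def by auto
    qed
  qed
  have nb0: "0 \<in> NB ?E A"
  proof -
    have "n \<in> A" unfolding A_def A2_def using s1 by force
    then show ?thesis by (rule NB_I) (rule H_0n)
  qed
  have nbc: "x \<in> NB ?E A" if x: "even x" "2 \<le> x" "x < n" for x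
  proof -
    have "x mod 4 = 0 \<or> x mod 4 = 2" using x by presburger
    then show ?thesis
    proof
      assume x2: "x mod 4 = 2"
      define j where "j = x div 4"
      have j: "x = 4 * j + 2" unfolding j_def using x2 by presburger
      have "j < t" using x nt j by presburger
      then have a: "x + 1 \<in> A" unfolding A_def A1_def using j by auto
      have "x + 1 < n" using x nt j by presburger
      then have "(x + 1) mod n = x + 1" by simp
      moreover have "{x, (x + 1) mod n} \<in> cycle_E n" using x by (intro cyc_edge) auto
      ultimately have "{x, x + 1} \<in> ?E" by (simp add: H_cyc)
      then show ?thesis by (rule NB_I[OF a])
    next
      assume x0: "x mod 4 = 0"
      define j where "j = x div 4"
      have j: "x = 4 * j" unfolding j_def using x0 by presburger
      have j1: "j \<ge> 1" "j - 1 < t" using x nt j by presburger+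
      have "x - 1 = 4 * (j - 1) + 3" using j j1 by simp
      then have a: "x - 1 \<in> A" unfolding A_def A1_def using j1 by blast
      have "(x - 1 + 1) mod n = x" using x by simp
      moreover have "{x - 1, (x - 1 + 1) mod n} \<in> cycle_E n" using x by (intro cyc_edge) auto
      ultimately have "{x - 1, x} \<in> cycle_E n" by simp
      then have "{x, x - 1} \<in> ?E" by (simp add: H_cyc insert_commute)
      then show ?thesis by (rule NB_I[OF a])
    qed
  qed
  have nbp: "n + j \<in> NB ?E A" if j: "odd j" "j + 3 \<le> m" for j
  proof -
    have "j mod 4 = 1 \<or> j mod 4 = 3" using j by presburger
    then show ?thesis
    proof
      assume j1: "j mod 4 = 1"
      define i where "i = j div 4"
      have i: "j = 4 * i + 1" unfolding i_def using j1 by presburger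
      have "i < s" using j ms i by presburger
      then have a: "n + 4 * i \<in> A" unfolding A_def A2_def by blast
      have "4 * i + 2 < m" using j i by simp
      then have "{n + 4 * i, n + 4 * i + 1} \<in> ?E" by (rule H_path)
      then have "{n + j, n + 4 * i} \<in> ?E" using i by (simp add: insert_commute)
      then show ?thesis by (rule NB_I[OF a])
    next
      assume j3: "j mod 4 = 3"
      define i where "i = j div 4"
      have i: "j = 4 * i + 3" unfolding i_def using j3 by presburger
      have "i + 1 < s" using j ms i by presburger
      then have a: "n + 4 * (i + 1) \<in> A" unfolding A_def A2_def by blast
      have "j + 2 < m" using j by simp
      then have "{n + j, n + j + 1} \<in> ?E" by (rule H_path)
      moreover have "n + j + 1 = n + 4 * (i + 1)" using i by simp
      ultimately have "{n + j, n + 4 * (i + 1)} \<in> ?E" by (simp only:)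
      then show ?thesis by (rule NB_I[OF a])
    qed
  qed
  have d: "domc ?E A" unfolding domc_def
  proof
    fix e assume "e \<in> ?E"
    then show "\<exists>u\<in>e. u \<in> NB ?E A"
    proof (cases rule: H_cases)
      case (cyc i)
      show ?thesis
      proof (cases "i = 0")
        case True then show ?thesis using cyc nb0 by auto
      next
        case False
        show ?thesis
        proof (cases "i + 1 < n")
          case False
          then have "i + 1 = n" using cyc by simp
          then have "(i + 1) mod n = 0" by simp
          then show ?thesis using cyc nb0 by auto
        next
          case True
          then have e: "e = {i, i + 1}" using cyc by simp
          show ?thesis
          proof (cases "even i")
            case True then show ?thesis using nbc[of i] \<open>i \<noteq> 0\<close> cyc e by auto
          next
            case False
            then have "i + 1 \<in> NB ?E A" using nbc[of "i + 1"] \<open>i + 1 < n\<close> \<open>i \<noteq> 0\<close> by simp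
            then show ?thesis using e by auto
          qed
        qed
      qed
    next
      case bridge then show ?thesis using nb0 by auto
    next
      case (path j)
      show ?thesis
      proof (cases "odd j")
        case True then show ?thesis using nbp[of j] path by auto
      next
        case False
        then have "odd (j + 1)" "j + 1 + 3 \<le> m" using path ms by presburger+
        then show ?thesis using nbp[of "j + 1"] path by auto
      qed
    qed
  qed
  have ind: "\<forall>e\<in>?E. \<not> e \<subseteq> A"
  proof (intro ballI notI)
    fix e assume "e \<in> ?E" "e \<subseteq> A"
    have zA: "0 \<notin> A" using A1c A2c n unfolding A_def by fastforce
    from \<open>e \<in> ?E\<close> show False
    proof (cases rule: H_cases)
      case (cyc i)
      show False
      proof (cases "i + 1 < n")
        case False
        then have "i + 1 = n" using cyc by simp
          then have "(i + 1) mod n = 0" by simp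
        then show False using cyc \<open>e \<subseteq> A\<close> zA by auto
      next
        case True
        then have "i \<in> A" "i + 1 \<in> A" using cyc \<open>e \<subseteq> A\<close> by auto
        then have "i \<in> A1" "i + 1 \<in> A1" using A2c True unfolding A_def by fastforce+
        then have "i mod 4 = 3" "(i + 1) mod 4 = 3" using A1c by blast+
        then show False by presburger
      qed
    next
      case bridge then show False using \<open>e \<subseteq> A\<close> zA by auto
    next
      case (path j)
      then have "n + j \<in> A" "n + j + 1 \<in> A" using \<open>e \<subseteq> A\<close> by auto
      then have "n + j \<in> A2" "n + j + 1 \<in> A2" using A1c unfolding A_def by fastforce+
      then have "j mod 4 = 0" "(j + 1) mod 4 = 0" using A2c by fastforce+
      then show False by presburger
    qed
  qed
  have "v_graph TYPE('k) (H_V n m) ?E = card A"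
  proof (rule v_graph_eq[OF H_graph_ok[OF n m] AV ind d])
    fix B assume "finite B" "B \<subseteq> H_V n m" "domc ?E B"
    then have "n + m - 2 \<le> 4 * card B + 2" using H_lower[OF n m] by blast
    then show "card A \<le> card B" using cA nt ms by auto
  qed
  then show ?thesis using cA t_def s_def by simp
qed

theorem corollary3p8:
  fixes n m :: nat
  assumes "n \<ge> 3" and "m \<ge> 3"
    and "n mod 4 = 1 \<or> n mod 4 = 2" and "m mod 4 = 0"
  shows "v_graph TYPE('k::field) (H_V n m) (H_E n m)
         = v_graph TYPE('k) (cycle_V n) (cycle_E n) + v_graph TYPE('k) (path_V (m - 2)) (path_E (m - 2)) - 1"
  using H_value[where 'k='k, OF assms] cyc_value[where 'k='k, OF assms(1,3)]
    path_value[where 'k='k, OF assms(2,4)] by simp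


end
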